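(* Let $S_6$ be the simple undirected graph on vertex set $\{1,2,\dots,33\}$ whose edges are the path edges $\{j,j+1\}$ for $j=1,\dots,32$ together with the ten edges $\{1,24\},\{4,9\},\{6,31\},\{7,12\},\{10,15\},\{13,18\},\{16,27\},\{22,33\},\{25,30\},\{28,33\}$. Designate incoming vertices $i_1=1,\ i_2=7,\ i_3=13,\ i_4=19,\ i_5=25,\ i_6=31$ and outgoing vertices $o_1=33,\ o_2=27,\ o_3=3,\ o_4=9,\ o_5=21,\ o_6=15$. Let $G$ be any finite simple undirected graph that contains $S_6$ as an induced subgraph, has at least one vertex not in $S_6$, and is such that every edge of $G$ joining a vertex of $S_6$ to a vertex outside $S_6$ has its endpoint in $S_6$ belonging to $\{i_1,\dots,i_6,o_1,\dots,o_6\}$. Then for every Hamiltonian cycle $H$ of $G$, the edges of $H$ having both endpoints in $S_6$ form a single path that visits every vertex of $S_6$ (i.e. $H$ enters $S_6$ exactly once, traverses all of it, and leaves), and the two endpoints of this path are $i_k$ and $o_k$ for some $k\in\{1,\dots,6\}$.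
   Context: A Hamiltonian cycle of a graph is a cycle passing through every vertex exactly once. This is the "in-out property" for the subgraph $S_6$: each copy of it behaves like a single vertex in any Hamiltonian cycle, and a cycle entering at the $k$-th incoming vertex must leave at the $k$-th outgoing vertex. *)

theory Defs
  imports Main
begin

definition simple_graph :: "'a set \<Rightarrow> ('a \<Rightarrow> 'a \<Rightarrow> bool) \<Rightarrow> bool" where
  "simple_graph V E \<longleftrightarrow> finite V \<and> (\<forall>x y. E x y \<longrightarrow> x \<in> V \<and> y \<in> V)
     \<and> (\<forall>x y. E x y \<longrightarrow> E y x) \<and> (\<forall>x. \<not> E x x)"

definition S6_extra :: "(nat \<times> nat) set" where
  "S6_extra = {(1,24),(4,9),(6,31),(7,12),(10,15),(13,18),(16,27),(22,33),(25,30),(28,33)}"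

definition S6_edge :: "nat \<Rightarrow> nat \<Rightarrow> bool" where
  "S6_edge u v \<longleftrightarrow> u \<in> {1..33} \<and> v \<in> {1..33} \<and>
     (v = u + 1 \<or> u = v + 1 \<or> (u, v) \<in> S6_extra \<or> (v, u) \<in> S6_extra)"

definition S6_in :: "nat list" where "S6_in = [1, 7, 13, 19, 25, 31]"
definition S6_out :: "nat list" where "S6_out = [33, 27, 3, 9, 21, 15]"

definition ham_cycle :: "'a set \<Rightarrow> ('a \<Rightarrow> 'a \<Rightarrow> bool) \<Rightarrow> 'a list \<Rightarrow> bool" where
  "ham_cycle V E cs \<longleftrightarrow> length cs \<ge> 3 \<and> distinct cs \<and> set cs = V \<and>
     (\<forall>i < length cs. E (cs ! i) (cs ! ((i + 1) mod length cs)))"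

definition cycle_edges :: "'a list \<Rightarrow> 'a set set" where
  "cycle_edges cs = {{cs ! i, cs ! ((i + 1) mod length cs)} | i. i < length cs}"

end

theory Submission
  imports Defs
begin


lemma ce_iff:
  assumes d: "distinct H" and l: "3 \<le> length H" and i: "i < length H"
  shows "{H!i, y} \<in> cycle_edges H \<longleftrightarrow>
     y = H!((i+1) mod length H) \<or> y = H!((i + length H - 1) mod length H)"
proof
  let ?n = "length H"
  assume "{H!i, y} \<in> cycle_edges H"
  then obtain j where j: "j < ?n" and eq: "{H!i, y} = {H!j, H!((j+1) mod ?n)}"
    unfolding cycle_edges_def by blast
  have "0 < ?n" using l by linarith
  then have jn: "(j+1) mod ?n < ?n" by simp
  from eq consider "H!i = H!j \<and> y = H!((j+1) mod ?n)" | "H!i = H!((j+1) mod ?n) \<and> y = H!j"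
    by (auto simp: doubleton_eq_iff)
  then show "y = H!((i+1) mod ?n) \<or> y = H!((i + ?n - 1) mod ?n)"
  proof cases
    case 1
    then have "i = j" using d i j nth_eq_iff_index_eq by blast
    then show ?thesis using 1 by simp
  next
    case 2
    then have ij: "i = (j+1) mod ?n" using d i jn nth_eq_iff_index_eq by blast
    have "j = (i + ?n - 1) mod ?n"
    proof (cases "j + 1 < ?n")
      case True
      then have "i = j + 1" using ij by simp
      then show ?thesis using j by simp
    next
      case False
      then have "j = ?n - 1" using j by simp
      have "j + 1 = ?n" using False j by simp
      with ij have "i = 0" by simp
      then show ?thesis using \<open>j = ?n - 1\<close> l by simp
    qed
    then show ?thesis using 2 by simp
  qed
next
  let ?n = "length H"
  assume "y = H!((i+1) mod ?n) \<or> y = H!((i + ?n - 1) mod ?n)"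
  then show "{H!i, y} \<in> cycle_edges H"
  proof
    assume "y = H!((i+1) mod ?n)"
    then show ?thesis unfolding cycle_edges_def using i by blast
  next
    assume y: "y = H!((i + ?n - 1) mod ?n)"
    let ?j = "(i + ?n - 1) mod ?n"
    have "(?j + 1) mod ?n = (i + ?n - 1 + 1) mod ?n" by (simp add: mod_Suc_eq)
    also have "i + ?n - 1 + 1 = i + ?n" using l by linarith
    also have "(i + ?n) mod ?n = i" using i by simp
    finally have "{H!i, y} = {H!?j, H!((?j+1) mod ?n)}" using y by auto
    moreover have "?j < ?n" using l by (intro mod_less_divisor) linarith
    ultimately show ?thesis unfolding cycle_edges_def by blast
  qed
qed

lemma nxt_prv_neq:
  assumes d: "distinct H" and l: "3 \<le> length H" and i: "i < length H"
  shows "H!((i+1) mod length H) \<noteq> H!((i + length H - 1) mod length H)"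
proof -
  let ?n = "length H"
  have "(i+1) mod ?n \<noteq> (i + ?n - 1) mod ?n"
  proof (cases "i = 0")
    case True then show ?thesis using l by simp
  next
    case False
    show ?thesis
    proof (cases "i + 1 = ?n")
      case True
      then have "(i + ?n - 1) mod ?n = i - 1" using False l by (simp add: mod_if)
      then show ?thesis using True l False by simp
    next
      case F2: False
      have "i + ?n - 1 = (i - 1) + ?n" using False by simp
      then have "(i + ?n - 1) mod ?n = (i - 1) mod ?n" by simp
      also have "\<dots> = i - 1" using i by simp
      finally have "(i + ?n - 1) mod ?n = i - 1" .
      moreover have "(i+1) mod ?n = i + 1" using F2 i by simp
      ultimately show ?thesis by simp
    qed
  qed
  moreover have "(i+1) mod ?n < ?n" "(i + ?n - 1) mod ?n < ?n" using l by (intro mod_less_divisor; linarith)+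
  ultimately show ?thesis using d nth_eq_iff_index_eq by metis
qed

definition EL :: "(nat \<times> nat) list" where
  "EL = [(1,2),(2,3),(3,4),(4,5),(5,6),(6,7),(7,8),(8,9),(9,10),(10,11),(11,12),(12,13),(13,14),(14,15),(15,16),(16,17),(17,18),(18,19),(19,20),(20,21),(21,22),(22,23),(23,24),(24,25),(25,26),(26,27),(27,28),(28,29),(29,30),(30,31),(31,32),(32,33),(1,24),(4,9),(6,31),(7,12),(10,15),(13,18),(16,27),(22,33),(25,30),(28,33)]"

lemma upt33: "[1..<33] = ([1,2,3,4,5,6,7,8,9,10,11,12,13,14,15,16,17,18,19,20,21,22,23,24,25,26,27,28,29,30,31,32] :: nat list)"
  by (simp add: upt_rec)

lemma EL_path: "u \<in> {1..32} \<Longrightarrow> (u, Suc u) \<in> set EL"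
proof -
  assume "u \<in> {1..32}"
  then have "u \<in> set [1..<33]" by auto
  then have "u \<in> set ([1,2,3,4,5,6,7,8,9,10,11,12,13,14,15,16,17,18,19,20,21,22,23,24,25,26,27,28,29,30,31,32] :: nat list)" unfolding upt33 .
  then show ?thesis unfolding EL_def by (simp, elim disjE) simp_all
qed

lemma EL_cover: "S6_edge u v \<Longrightarrow> (u,v) \<in> set EL \<or> (v,u) \<in> set EL"
proof -
  assume "S6_edge u v"
  then have uv: "u \<in> {1..33}" "v \<in> {1..33}" "v = u + 1 \<or> u = v + 1 \<or> (u, v) \<in> S6_extra \<or> (v, u) \<in> S6_extra"
    unfolding S6_edge_def by auto
  have ex: "set [(1,24),(4,9),(6,31),(7,12),(10,15),(13,18),(16,27),(22,33),(25,30),(28,33)] \<subseteq> set EL"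
    unfolding EL_def by simp
  have "S6_extra = set [(1,24),(4,9),(6,31),(7,12),(10,15),(13,18),(16,27),(22,33),(25,30),(28,33)]"
    unfolding S6_extra_def by simp
  then have exs: "S6_extra \<subseteq> set EL" using ex by simp
  from uv(3) show ?thesis
  proof (elim disjE)
    assume "v = u + 1" then show ?thesis using uv EL_path[of u] by auto
  next
    assume "u = v + 1" then show ?thesis using uv EL_path[of v] by auto
  qed (use exs in auto)
qed

lemma set_card33: "length (p::nat list) = 33 \<Longrightarrow> distinct p \<Longrightarrow> set p \<subseteq> {1..33} \<Longrightarrow> set p = {1..33}"
  by (rule card_subset_eq) (simp_all add: distinct_card)

lemma zip_set33: "length (p::nat list) = 33 \<Longrightarrow> set (zip p (tl p)) = {(p!j, p!(j+1)) | j. j < 32}"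
  by (auto simp: set_zip nth_tl)

locale gad =
  fixes V :: "'a set" and E :: "'a \<Rightarrow> 'a \<Rightarrow> bool" and f :: "nat \<Rightarrow> 'a" and H :: "'a list"
  assumes graph: "simple_graph V E"
    and emb1: "inj_on f {1..33}" and emb2: "f ` {1..33} \<subseteq> V"
    and induced: "\<forall>u\<in>{1..33}. \<forall>v\<in>{1..33}. E (f u) (f v) \<longleftrightarrow> S6_edge u v"
    and outside: "V - f ` {1..33} \<noteq> {}"
    and attach: "\<forall>u\<in>{1..33}. \<forall>w\<in>V - f ` {1..33}. E (f u) w \<longrightarrow> u \<in> set S6_in \<union> set S6_out"
    and ham: "ham_cycle V E H"
begin

definition F :: "nat \<Rightarrow> nat \<Rightarrow> bool" where "F u v \<longleftrightarrow> {f u, f v} \<in> cycle_edges H"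

lemma dH: "distinct H" and lH: "3 \<le> length H" and setH: "set H = V"
  and adjH: "\<And>i. i < length H \<Longrightarrow> E (H!i) (H!((i+1) mod length H))"
  using ham unfolding ham_cycle_def by auto

lemma Esym: "E a b \<Longrightarrow> E b a" using graph unfolding simple_graph_def by blast
lemma EV: "E a b \<Longrightarrow> b \<in> V" using graph unfolding simple_graph_def by blast

lemma Fsym: "F u v = F v u" unfolding F_def by (simp add: insert_commute)

lemma cycE: assumes "{a,b} \<in> cycle_edges H" shows "E a b"
proof -
  obtain i where i: "i < length H" and eq: "{a,b} = {H!i, H!((i+1) mod length H)}"
    using assms unfolding cycle_edges_def by blast
  have "E (H!i) (H!((i+1) mod length H))" using adjH i .
  then show ?thesis using eq Esym by (auto simp: doubleton_eq_iff)
qed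

lemma F_edge: "u \<in> {1..33} \<Longrightarrow> v \<in> {1..33} \<Longrightarrow> F u v \<Longrightarrow> S6_edge u v"
  using induced cycE unfolding F_def by blast

lemma posH: "x \<in> V \<Longrightarrow> \<exists>i<length H. H!i = x"
  using setH by (metis in_set_conv_nth)

lemma nb: "i < length H \<Longrightarrow> {H!i, y} \<in> cycle_edges H \<longleftrightarrow>
     y = H!((i+1) mod length H) \<or> y = H!((i + length H - 1) mod length H)"
  using ce_iff[OF dH lH] .

lemma deg_le2:
  assumes u: "u \<in> {1..33}" and w: "w1 \<in> {1..33}" "w2 \<in> {1..33}" "w3 \<in> {1..33}"
    and dw: "w1 \<noteq> w2" "w1 \<noteq> w3" "w2 \<noteq> w3"
  shows "\<not> (F u w1 \<and> F u w2 \<and> F u w3)"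
proof
  assume Fs: "F u w1 \<and> F u w2 \<and> F u w3"
  have "f u \<in> V" using emb2 u by (simp add: image_subset_iff)
  then obtain i where i: "i < length H" "H!i = f u" using posH by blast
  have fw: "f w1 \<noteq> f w2" "f w1 \<noteq> f w3" "f w2 \<noteq> f w3"
    using inj_on_contraD[OF emb1 dw(1) w(1) w(2)] inj_on_contraD[OF emb1 dw(2) w(1) w(3)]
      inj_on_contraD[OF emb1 dw(3) w(2) w(3)] by simp_all
  from Fs have "{H!i, f w1} \<in> cycle_edges H" "{H!i, f w2} \<in> cycle_edges H" "{H!i, f w3} \<in> cycle_edges H"
    unfolding F_def using i(2) by simp_all
  then have "f w1 = H!((i+1) mod length H) \<or> f w1 = H!((i + length H - 1) mod length H)"
     "f w2 = H!((i+1) mod length H) \<or> f w2 = H!((i + length H - 1) mod length H)"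
     "f w3 = H!((i+1) mod length H) \<or> f w3 = H!((i + length H - 1) mod length H)"
    using nb[OF i(1)] by simp_all
  then show False using fw by auto
qed

lemma deg_ge2:
  assumes u: "u \<in> {1..33}" and nt: "u \<notin> set S6_in \<union> set S6_out"
  shows "\<exists>w1 w2. w1 \<noteq> w2 \<and> F u w1 \<and> F u w2 \<and> S6_edge u w1 \<and> S6_edge u w2"
proof -
  obtain i where i: "i < length H" "H!i = f u" using posH emb2 u by blast
  let ?a = "H!((i+1) mod length H)" and ?b = "H!((i + length H - 1) mod length H)"
  have ab: "?a \<noteq> ?b" using nxt_prv_neq[OF dH lH i(1)] .
  have Ea: "E (f u) ?a" using adjH[OF i(1)] i(2) by simp
  have "(i + length H - 1) mod length H < length H" using lH by (intro mod_less_divisor) linarith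
  then have "E ?b (H!(((i + length H - 1) mod length H + 1) mod length H))" by (rule adjH)
  moreover have "((i + length H - 1) mod length H + 1) mod length H = i"
  proof -
    have "((i + length H - 1) mod length H + 1) mod length H = (i + length H - 1 + 1) mod length H"
      by (simp add: mod_Suc_eq)
    also have "i + length H - 1 + 1 = i + length H" using lH by linarith
    also have "(i + length H) mod length H = i" using i by simp
    finally show ?thesis .
  qed
  ultimately have Eb: "E (f u) ?b" using i(2) Esym by simp
  have "?a \<in> f ` {1..33}"
  proof (rule ccontr)
    assume "?a \<notin> f ` {1..33}"
    then have "?a \<in> V - f ` {1..33}" using EV[OF Ea] by simp
    then show False using attach u nt Ea by blast
  qed
  then obtain w1 where w1: "w1 \<in> {1..33}" "f w1 = ?a" by (metis imageE)
  have "?b \<in> f ` {1..33}"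
  proof (rule ccontr)
    assume "?b \<notin> f ` {1..33}"
    then have "?b \<in> V - f ` {1..33}" using EV[OF Eb] by simp
    then show False using attach u nt Eb by blast
  qed
  then obtain w2 where w2: "w2 \<in> {1..33}" "f w2 = ?b" by (metis imageE)
  have r1: "w1 \<noteq> w2"
  proof
    assume "w1 = w2"
    then have "?a = ?b" using w1(2) w2(2) by simp
    with ab show False by simp
  qed
  have "{H!i, ?a} \<in> cycle_edges H" "{H!i, ?b} \<in> cycle_edges H" using nb[OF i(1)] by simp_all
  then have r2: "F u w1" "F u w2" unfolding F_def using i(2) w1(2) w2(2) by simp_all
  have r3: "E (f u) (f w1)" "E (f u) (f w2)" using Ea Eb w1(2) w2(2) by simp_all
  have r4: "S6_edge u w1" "S6_edge u w2"
    using induced[rule_format, OF u w1(1)] induced[rule_format, OF u w2(1)] r3 by simp_all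
  show ?thesis
    apply (rule exI[of _ w1], rule exI[of _ w2])
    using r1 r2 r4 by simp
qed

lemma no_cycle:
  assumes cs: "set cs \<subseteq> {1..33}" "distinct cs" "3 \<le> length cs"
    and Fc: "\<forall>k<length cs. F (cs!k) (cs!((k+1) mod length cs))"
  shows False
proof -
  let ?m = "length cs" and ?n = "length H" and ?C = "f ` set cs"
  have clo: "H!((i+1) mod ?n) \<in> ?C" if i: "i < ?n" "H!i \<in> ?C" for i
  proof -
    obtain c where c: "c \<in> set cs" "H!i = f c" using i(2) by blast
    then obtain k where k: "k < ?m" "H!i = f (cs!k)" by (auto simp: in_set_conv_nth)
    let ?a = "cs!((k+1) mod ?m)" and ?b = "cs!((k + ?m - 1) mod ?m)"
    have km: "(k+1) mod ?m < ?m" "(k + ?m - 1) mod ?m < ?m" using cs(3) by (intro mod_less_divisor; linarith)+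
    have ab: "?a \<noteq> ?b" using nxt_prv_neq[OF cs(2) cs(3) k(1)] .
    have "?a \<in> set cs" "?b \<in> set cs" using km by simp_all
    then have abS: "?a \<in> {1..33}" "?b \<in> {1..33}" using cs(1) by blast+
    have fab: "f ?a \<noteq> f ?b" using inj_on_contraD[OF emb1 ab abS] .
    have "((k + ?m - 1) mod ?m + 1) mod ?m = k"
    proof -
      have "((k + ?m - 1) mod ?m + 1) mod ?m = (k + ?m - 1 + 1) mod ?m"
        by (simp add: mod_Suc_eq)
      also have "k + ?m - 1 + 1 = k + ?m" using cs(3) by linarith
      also have "(k + ?m) mod ?m = k" using k by simp
      finally show ?thesis .
    qed
    moreover have "F ?b (cs!(((k + ?m - 1) mod ?m + 1) mod ?m))" using Fc km(2) by blast
    ultimately have "F ?b (cs!k)" by simp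
    then have Fb: "F (cs!k) ?b" by (simp add: Fsym)
    have Fa: "F (cs!k) ?a" using Fc k(1) by blast
    have "{H!i, f ?a} \<in> cycle_edges H" "{H!i, f ?b} \<in> cycle_edges H"
      using Fa Fb k(2) unfolding F_def by simp_all
    then have "f ?a = H!((i+1) mod ?n) \<or> f ?a = H!((i + ?n - 1) mod ?n)"
      "f ?b = H!((i+1) mod ?n) \<or> f ?b = H!((i + ?n - 1) mod ?n)"
      using nb[OF i(1)] by simp_all
    then have "H!((i+1) mod ?n) \<in> {f ?a, f ?b}" using fab by auto
    moreover have "?a \<in> set cs" "?b \<in> set cs" using km by auto
    ultimately show ?thesis by auto
  qed
  have n0: "0 < ?n" using lH by linarith
  have cs0: "cs!0 \<in> set cs" using cs(3) by (intro nth_mem) linarith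
  have "cs!0 \<in> {1..33}" using cs0 cs(1) by blast
  then have "f (cs!0) \<in> V" using emb2 by blast
  then obtain i0 where i0: "i0 < ?n" "H!i0 = f (cs!0)" using posH by blast
  have all: "H!((i0 + j) mod ?n) \<in> ?C" for j
  proof (induction j)
    case 0
    show ?case using i0 cs0 by simp
  next
    case (Suc j)
    have "H!(((i0 + j) mod ?n + 1) mod ?n) \<in> ?C" using clo[OF _ Suc.IH] n0 by simp
    then show ?case by (simp add: mod_Suc_eq)
  qed
  have "V \<subseteq> ?C"
  proof
    fix x assume "x \<in> V"
    then obtain j where j: "j < ?n" "H!j = x" using posH by blast
    have "(i0 + (?n - i0 + j)) mod ?n = j" using i0(1) j(1) by simp
    then show "x \<in> ?C" using all[of "?n - i0 + j"] j by simp
  qed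
  moreover have "?C \<subseteq> f ` {1..33}" using cs(1) by auto
  ultimately show False using outside by auto
qed

lemma no_cycle2:
  assumes "set cs \<subseteq> {1..33}" "distinct cs" "3 \<le> length cs"
    and "list_all (\<lambda>(a,b). F a b) (zip cs (tl cs @ [hd cs]))"
  shows False
proof (rule no_cycle[OF assms(1-3)], intro allI impI)
  fix k assume k: "k < length cs"
  let ?m = "length cs"
  have e1: "(zip cs (tl cs @ [hd cs]))!k = (cs!k, (tl cs @ [hd cs])!k)" using k by simp
  have e2: "(tl cs @ [hd cs])!k = cs!((k+1) mod ?m)"
  proof (cases "k + 1 < ?m")
    case True
    then have "k < length (tl cs)" by simp
    then show ?thesis by (simp add: nth_append nth_tl)
  next
    case False
    then have kl: "k = length (tl cs)" using k by simp
    have "k + 1 = ?m" using False k by simp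
    then have km0: "(k+1) mod ?m = 0" by simp
    have "cs \<noteq> []" using k by auto
    then have "hd cs = cs!0" by (rule hd_conv_nth)
    then show ?thesis unfolding km0 using kl by (simp add: nth_append)
  qed
  have len: "length (zip cs (tl cs @ [hd cs])) = ?m" using k by simp
  have all: "\<forall>n<length (zip cs (tl cs @ [hd cs])). (\<lambda>(a,b). F a b) ((zip cs (tl cs @ [hd cs]))!n)"
    using assms(4) by (simp only: list_all_length)
  have "(\<lambda>(a,b). F a b) ((zip cs (tl cs @ [hd cs]))!k)"
    by (rule all[rule_format]) (simp add: len k)
  then have "(\<lambda>(a,b). F a b) (cs!k, cs!((k+1) mod ?m))" unfolding e1 e2 .
  then show "F (cs!k) (cs!((k+1) mod ?m))" by simp
qed

lemma lhs_eq: "{e \<in> cycle_edges H. e \<subseteq> f ` {1..33}} = {{f u, f v} | u v. u \<in> {1..33} \<and> v \<in> {1..33} \<and> F u v}"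
proof
  show "{{f u, f v} | u v. u \<in> {1..33} \<and> v \<in> {1..33} \<and> F u v} \<subseteq> {e \<in> cycle_edges H. e \<subseteq> f ` {1..33}}"
    unfolding F_def by auto
next
  show "{e \<in> cycle_edges H. e \<subseteq> f ` {1..33}} \<subseteq> {{f u, f v} | u v. u \<in> {1..33} \<and> v \<in> {1..33} \<and> F u v}"
  proof
    fix e assume e: "e \<in> {e \<in> cycle_edges H. e \<subseteq> f ` {1..33}}"
    then obtain i where eq: "e = {H!i, H!((i+1) mod length H)}" unfolding cycle_edges_def by blast
    have "H!i \<in> f ` {1..33}" "H!((i+1) mod length H) \<in> f ` {1..33}" using e eq by auto
    then obtain u v where "u \<in> {1..33}" "v \<in> {1..33}" "H!i = f u" "H!((i+1) mod length H) = f v"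
      by blast
    with eq show "e \<in> {{f u, f v} | u v. u \<in> {1..33} \<and> v \<in> {1..33} \<and> F u v}"
      using e unfolding F_def by auto
  qed
qed

lemma finish:
  assumes p: "length p = 33" "set p = {1..33}"
    and FF: "\<forall>(a,b)\<in>set EL. F a b \<longleftrightarrow> ((a,b) \<in> set (zip p (tl p)) \<or> (b,a) \<in> set (zip p (tl p)))"
    and PE: "\<forall>(a,b)\<in>set (zip p (tl p)). (a,b) \<in> set EL \<or> (b,a) \<in> set EL"
  shows "{e \<in> cycle_edges H. e \<subseteq> f ` {1..33}} = {{f (p!j), f (p!(j+1))} | j. j < 32}"
proof -
  let ?Z = "set (zip p (tl p))"
  have Z: "?Z = {(p!j, p!(j+1)) | j. j < 32}" using zip_set33[OF p(1)] .
  have FF1: "F u v" if "(u,v) \<in> ?Z" for u v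
  proof -
    have "(u,v) \<in> set EL \<or> (v,u) \<in> set EL" using PE that by blast
    then show ?thesis
    proof
      assume "(u,v) \<in> set EL" then show ?thesis using FF that by blast
    next
      assume "(v,u) \<in> set EL" then have "F v u" using FF that by blast
      then show ?thesis by (simp add: Fsym)
    qed
  qed
  have FF2: "(u,v) \<in> ?Z \<or> (v,u) \<in> ?Z" if "u \<in> {1..33}" "v \<in> {1..33}" "F u v" for u v
  proof -
    have "(u,v) \<in> set EL \<or> (v,u) \<in> set EL" using EL_cover F_edge that by blast
    then show ?thesis
    proof
      assume "(u,v) \<in> set EL" then show ?thesis using FF that by blast
    next
      assume "(v,u) \<in> set EL" moreover have "F v u" using that(3) by (simp add: Fsym)
      ultimately show ?thesis using FF by blast
    qed
  qed
  have "{{f u, f v} | u v. u \<in> {1..33} \<and> v \<in> {1..33} \<and> F u v} = {{f (p!j), f (p!(j+1))} | j. j < 32}"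
  proof
    show "{{f u, f v} | u v. u \<in> {1..33} \<and> v \<in> {1..33} \<and> F u v} \<subseteq> {{f (p!j), f (p!(j+1))} | j. j < 32}"
    proof
      fix e assume "e \<in> {{f u, f v} | u v. u \<in> {1..33} \<and> v \<in> {1..33} \<and> F u v}"
      then obtain u v where uv: "e = {f u, f v}" "u \<in> {1..33}" "v \<in> {1..33}" "F u v" by blast
      from FF2[OF uv(2-4)] obtain j where "j < 32" "(u = p!j \<and> v = p!(j+1)) \<or> (v = p!j \<and> u = p!(j+1))"
        unfolding Z by blast
      then show "e \<in> {{f (p!j), f (p!(j+1))} | j. j < 32}" using uv(1) by (auto simp: insert_commute)
    qed
  next
    show "{{f (p!j), f (p!(j+1))} | j. j < 32} \<subseteq> {{f u, f v} | u v. u \<in> {1..33} \<and> v \<in> {1..33} \<and> F u v}"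
    proof
      fix e assume "e \<in> {{f (p!j), f (p!(j+1))} | j. j < 32}"
      then obtain j where j: "j < 32" "e = {f (p!j), f (p!(j+1))}" by blast
      have "p!j \<in> set p" "p!(j+1) \<in> set p" using j(1) p(1) by simp_all
      then have "p!j \<in> {1..33}" "p!(j+1) \<in> {1..33}" using p(2) by simp_all
      moreover have "F (p!j) (p!(j+1))" using FF1 Z j(1) by blast
      ultimately show "e \<in> {{f u, f v} | u v. u \<in> {1..33} \<and> v \<in> {1..33} \<and> F u v}" using j(2) by blast
    qed
  qed
  then show ?thesis using lhs_eq by simp
qed

end


context gad begin

lemma c2: "F 1 2 \<and> F 2 3"
  using deg_ge2[of 2] by (auto simp: S6_edge_def S6_extra_def S6_in_def S6_out_def Fsym)

lemma c4: "(F 3 4 \<or> F 4 5) \<and> (F 3 4 \<or> F 4 9) \<and> (F 4 5 \<or> F 4 9)"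
  using deg_ge2[of 4] by (auto simp: S6_edge_def S6_extra_def S6_in_def S6_out_def Fsym)

lemma d4: "\<not> (F 3 4 \<and> F 4 5 \<and> F 4 9)"
  using deg_le2[of 4 3 5 9] by (simp add: Fsym)

lemma c5: "F 4 5 \<and> F 5 6"
  using deg_ge2[of 5] by (auto simp: S6_edge_def S6_extra_def S6_in_def S6_out_def Fsym)

lemma c6: "(F 5 6 \<or> F 6 7) \<and> (F 5 6 \<or> F 6 31) \<and> (F 6 7 \<or> F 6 31)"
  using deg_ge2[of 6] by (auto simp: S6_edge_def S6_extra_def S6_in_def S6_out_def Fsym)

lemma d6: "\<not> (F 5 6 \<and> F 6 7 \<and> F 6 31)"
  using deg_le2[of 6 5 7 31] by (simp add: Fsym)

lemma d7: "\<not> (F 6 7 \<and> F 7 8 \<and> F 7 12)"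
  using deg_le2[of 7 6 8 12] by (simp add: Fsym)

lemma c8: "F 7 8 \<and> F 8 9"
  using deg_ge2[of 8] by (auto simp: S6_edge_def S6_extra_def S6_in_def S6_out_def Fsym)

lemma d9: "\<not> (F 4 9 \<and> F 8 9 \<and> F 9 10)"
  using deg_le2[of 9 4 8 10] by (simp add: Fsym)

lemma c10: "(F 9 10 \<or> F 10 11) \<and> (F 9 10 \<or> F 10 15) \<and> (F 10 11 \<or> F 10 15)"
  using deg_ge2[of 10] by (auto simp: S6_edge_def S6_extra_def S6_in_def S6_out_def Fsym)

lemma d10: "\<not> (F 9 10 \<and> F 10 11 \<and> F 10 15)"
  using deg_le2[of 10 9 11 15] by (simp add: Fsym)

lemma c11: "F 10 11 \<and> F 11 12"
  using deg_ge2[of 11] by (auto simp: S6_edge_def S6_extra_def S6_in_def S6_out_def Fsym)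

lemma c12: "(F 7 12 \<or> F 11 12) \<and> (F 7 12 \<or> F 12 13) \<and> (F 11 12 \<or> F 12 13)"
  using deg_ge2[of 12] by (auto simp: S6_edge_def S6_extra_def S6_in_def S6_out_def Fsym)

lemma d12: "\<not> (F 7 12 \<and> F 11 12 \<and> F 12 13)"
  using deg_le2[of 12 7 11 13] by (simp add: Fsym)

lemma d13: "\<not> (F 12 13 \<and> F 13 14 \<and> F 13 18)"
  using deg_le2[of 13 12 14 18] by (simp add: Fsym)

lemma c14: "F 13 14 \<and> F 14 15"
  using deg_ge2[of 14] by (auto simp: S6_edge_def S6_extra_def S6_in_def S6_out_def Fsym)

lemma d15: "\<not> (F 10 15 \<and> F 14 15 \<and> F 15 16)"
  using deg_le2[of 15 10 14 16] by (simp add: Fsym)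

lemma c16: "(F 15 16 \<or> F 16 17) \<and> (F 15 16 \<or> F 16 27) \<and> (F 16 17 \<or> F 16 27)"
  using deg_ge2[of 16] by (auto simp: S6_edge_def S6_extra_def S6_in_def S6_out_def Fsym)

lemma d16: "\<not> (F 15 16 \<and> F 16 17 \<and> F 16 27)"
  using deg_le2[of 16 15 17 27] by (simp add: Fsym)

lemma c17: "F 16 17 \<and> F 17 18"
  using deg_ge2[of 17] by (auto simp: S6_edge_def S6_extra_def S6_in_def S6_out_def Fsym)

lemma c18: "(F 13 18 \<or> F 17 18) \<and> (F 13 18 \<or> F 18 19) \<and> (F 17 18 \<or> F 18 19)"
  using deg_ge2[of 18] by (auto simp: S6_edge_def S6_extra_def S6_in_def S6_out_def Fsym)

lemma d18: "\<not> (F 13 18 \<and> F 17 18 \<and> F 18 19)"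
  using deg_le2[of 18 13 17 19] by (simp add: Fsym)

lemma c20: "F 19 20 \<and> F 20 21"
  using deg_ge2[of 20] by (auto simp: S6_edge_def S6_extra_def S6_in_def S6_out_def Fsym)

lemma c22: "(F 21 22 \<or> F 22 23) \<and> (F 21 22 \<or> F 22 33) \<and> (F 22 23 \<or> F 22 33)"
  using deg_ge2[of 22] by (auto simp: S6_edge_def S6_extra_def S6_in_def S6_out_def Fsym)

lemma d22: "\<not> (F 21 22 \<and> F 22 23 \<and> F 22 33)"
  using deg_le2[of 22 21 23 33] by (simp add: Fsym)

lemma c23: "F 22 23 \<and> F 23 24"
  using deg_ge2[of 23] by (auto simp: S6_edge_def S6_extra_def S6_in_def S6_out_def Fsym)

lemma c24: "(F 1 24 \<or> F 23 24) \<and> (F 1 24 \<or> F 24 25) \<and> (F 23 24 \<or> F 24 25)"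
  using deg_ge2[of 24] by (auto simp: S6_edge_def S6_extra_def S6_in_def S6_out_def Fsym)

lemma d24: "\<not> (F 1 24 \<and> F 23 24 \<and> F 24 25)"
  using deg_le2[of 24 1 23 25] by (simp add: Fsym)

lemma d25: "\<not> (F 24 25 \<and> F 25 26 \<and> F 25 30)"
  using deg_le2[of 25 24 26 30] by (simp add: Fsym)

lemma c26: "F 25 26 \<and> F 26 27"
  using deg_ge2[of 26] by (auto simp: S6_edge_def S6_extra_def S6_in_def S6_out_def Fsym)

lemma d27: "\<not> (F 16 27 \<and> F 26 27 \<and> F 27 28)"
  using deg_le2[of 27 16 26 28] by (simp add: Fsym)

lemma c28: "(F 27 28 \<or> F 28 29) \<and> (F 27 28 \<or> F 28 33) \<and> (F 28 29 \<or> F 28 33)"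
  using deg_ge2[of 28] by (auto simp: S6_edge_def S6_extra_def S6_in_def S6_out_def Fsym)

lemma d28: "\<not> (F 27 28 \<and> F 28 29 \<and> F 28 33)"
  using deg_le2[of 28 27 29 33] by (simp add: Fsym)

lemma c29: "F 28 29 \<and> F 29 30"
  using deg_ge2[of 29] by (auto simp: S6_edge_def S6_extra_def S6_in_def S6_out_def Fsym)

lemma c30: "(F 25 30 \<or> F 29 30) \<and> (F 25 30 \<or> F 30 31) \<and> (F 29 30 \<or> F 30 31)"
  using deg_ge2[of 30] by (auto simp: S6_edge_def S6_extra_def S6_in_def S6_out_def Fsym)

lemma d30: "\<not> (F 25 30 \<and> F 29 30 \<and> F 30 31)"
  using deg_le2[of 30 25 29 31] by (simp add: Fsym)

lemma d31: "\<not> (F 6 31 \<and> F 30 31 \<and> F 31 32)"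
  using deg_le2[of 31 6 30 32] by (simp add: Fsym)

lemma c32: "F 31 32 \<and> F 32 33"
  using deg_ge2[of 32] by (auto simp: S6_edge_def S6_extra_def S6_in_def S6_out_def Fsym)

lemma d33: "\<not> (F 22 33 \<and> F 28 33 \<and> F 32 33)"
  using deg_le2[of 33 22 28 32] by (simp add: Fsym)

lemma y0: "\<not> (F 28 29 \<and> F 29 30 \<and> F 30 31 \<and> F 31 32 \<and> F 32 33 \<and> F 28 33)"
  using no_cycle2[of "[28,29,30,31,32,33]"] by (auto simp: Fsym)

lemma y1: "\<not> (F 1 2 \<and> F 2 3 \<and> F 3 4 \<and> F 4 5 \<and> F 5 6 \<and> F 6 7 \<and> F 7 8 \<and> F 8 9 \<and> F 9 10 \<and> F 10 11 \<and> F 11 12 \<and> F 12 13 \<and> F 13 14 \<and> F 14 15 \<and> F 15 16 \<and> F 16 17 \<and> F 17 18 \<and> F 18 19 \<and> F 19 20 \<and> F 20 21 \<and> F 21 22 \<and> F 22 23 \<and> F 23 24 \<and> F 1 24)"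
  using no_cycle2[of "[1,2,3,4,5,6,7,8,9,10,11,12,13,14,15,16,17,18,19,20,21,22,23,24]"] by (auto simp: Fsym)

lemma y2: "\<not> (F 22 23 \<and> F 23 24 \<and> F 24 25 \<and> F 25 26 \<and> F 26 27 \<and> F 27 28 \<and> F 28 29 \<and> F 29 30 \<and> F 30 31 \<and> F 31 32 \<and> F 32 33 \<and> F 22 33)"
  using no_cycle2[of "[22,23,24,25,26,27,28,29,30,31,32,33]"] by (auto simp: Fsym)

lemma y3: "\<not> (F 25 26 \<and> F 26 27 \<and> F 27 28 \<and> F 28 29 \<and> F 29 30 \<and> F 25 30)"
  using no_cycle2[of "[25,26,27,28,29,30]"] by (auto simp: Fsym)

lemma y4: "\<not> (F 16 17 \<and> F 17 18 \<and> F 18 19 \<and> F 19 20 \<and> F 20 21 \<and> F 21 22 \<and> F 22 23 \<and> F 23 24 \<and> F 24 25 \<and> F 25 26 \<and> F 26 27 \<and> F 16 27)"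
  using no_cycle2[of "[16,17,18,19,20,21,22,23,24,25,26,27]"] by (auto simp: Fsym)

lemma y5: "\<not> (F 10 11 \<and> F 11 12 \<and> F 12 13 \<and> F 13 14 \<and> F 14 15 \<and> F 10 15)"
  using no_cycle2[of "[10,11,12,13,14,15]"] by (auto simp: Fsym)

lemma y6: "\<not> (F 1 2 \<and> F 2 3 \<and> F 3 4 \<and> F 4 5 \<and> F 5 6 \<and> F 6 31 \<and> F 31 32 \<and> F 32 33 \<and> F 22 33 \<and> F 22 23 \<and> F 23 24 \<and> F 1 24)"
  using no_cycle2[of "[1,2,3,4,5,6,31,32,33,22,23,24]"] by (auto simp: Fsym)

lemma y7: "\<not> (F 1 2 \<and> F 2 3 \<and> F 3 4 \<and> F 4 5 \<and> F 5 6 \<and> F 6 31 \<and> F 31 32 \<and> F 32 33 \<and> F 28 33 \<and> F 28 29 \<and> F 29 30 \<and> F 25 30 \<and> F 25 26 \<and> F 26 27 \<and> F 16 27 \<and> F 16 17 \<and> F 17 18 \<and> F 18 19 \<and> F 19 20 \<and> F 20 21 \<and> F 21 22 \<and> F 22 23 \<and> F 23 24 \<and> F 1 24)"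
  using no_cycle2[of "[1,2,3,4,5,6,31,32,33,28,29,30,25,26,27,16,17,18,19,20,21,22,23,24]"] by (auto simp: Fsym)

lemma y8: "\<not> (F 7 8 \<and> F 8 9 \<and> F 9 10 \<and> F 10 11 \<and> F 11 12 \<and> F 7 12)"
  using no_cycle2[of "[7,8,9,10,11,12]"] by (auto simp: Fsym)

lemma y9: "\<not> (F 4 5 \<and> F 5 6 \<and> F 6 7 \<and> F 7 8 \<and> F 8 9 \<and> F 4 9)"
  using no_cycle2[of "[4,5,6,7,8,9]"] by (auto simp: Fsym)

lemma y10: "\<not> (F 4 5 \<and> F 5 6 \<and> F 6 31 \<and> F 31 32 \<and> F 32 33 \<and> F 28 33 \<and> F 28 29 \<and> F 29 30 \<and> F 25 30 \<and> F 25 26 \<and> F 26 27 \<and> F 16 27 \<and> F 16 17 \<and> F 17 18 \<and> F 13 18 \<and> F 13 14 \<and> F 14 15 \<and> F 10 15 \<and> F 10 11 \<and> F 11 12 \<and> F 7 12 \<and> F 7 8 \<and> F 8 9 \<and> F 4 9)"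
  using no_cycle2[of "[4,5,6,31,32,33,28,29,30,25,26,27,16,17,18,13,14,15,10,11,12,7,8,9]"] by (auto simp: Fsym)

lemma solve: "(F 1 2 \<and> F 2 3 \<and> F 3 4 \<and> F 4 5 \<and> F 5 6 \<and> F 6 7 \<and> F 7 8 \<and> F 8 9 \<and> F 9 10 \<and> F 10 11 \<and> F 11 12 \<and> F 12 13 \<and> F 13 14 \<and> F 14 15 \<and> F 15 16 \<and> F 16 17 \<and> F 17 18 \<and> F 18 19 \<and> F 19 20 \<and> F 20 21 \<and> F 21 22 \<and> F 22 23 \<and> F 23 24 \<and> F 24 25 \<and> F 25 26 \<and> F 26 27 \<and> F 27 28 \<and> F 28 29 \<and> F 29 30 \<and> F 30 31 \<and> F 31 32 \<and> F 32 33 \<and> \<not> F 1 24 \<and> \<not> F 4 9 \<and> \<not> F 6 31 \<and> \<not> F 7 12 \<and> \<not> F 10 15 \<and> \<not> F 13 18 \<and> \<not> F 16 27 \<and> \<not> F 22 33 \<and> \<not> F 25 30 \<and> \<not> F 28 33) \<or>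
   (F 1 2 \<and> F 2 3 \<and> F 3 4 \<and> F 4 5 \<and> F 5 6 \<and> \<not> F 6 7 \<and> F 7 8 \<and> F 8 9 \<and> F 9 10 \<and> F 10 11 \<and> F 11 12 \<and> F 12 13 \<and> F 13 14 \<and> F 14 15 \<and> F 15 16 \<and> F 16 17 \<and> F 17 18 \<and> F 18 19 \<and> F 19 20 \<and> F 20 21 \<and> F 21 22 \<and> F 22 23 \<and> F 23 24 \<and> \<not> F 24 25 \<and> F 25 26 \<and> F 26 27 \<and> \<not> F 27 28 \<and> F 28 29 \<and> F 29 30 \<and> \<not> F 30 31 \<and> F 31 32 \<and> F 32 33 \<and> F 1 24 \<and> \<not> F 4 9 \<and> F 6 31 \<and> \<not> F 7 12 \<and> \<not> F 10 15 \<and> \<not> F 13 18 \<and> \<not> F 16 27 \<and> \<not> F 22 33 \<and> F 25 30 \<and> F 28 33) \<or>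
   (F 1 2 \<and> F 2 3 \<and> \<not> F 3 4 \<and> F 4 5 \<and> F 5 6 \<and> \<not> F 6 7 \<and> F 7 8 \<and> F 8 9 \<and> \<not> F 9 10 \<and> F 10 11 \<and> F 11 12 \<and> \<not> F 12 13 \<and> F 13 14 \<and> F 14 15 \<and> \<not> F 15 16 \<and> F 16 17 \<and> F 17 18 \<and> F 18 19 \<and> F 19 20 \<and> F 20 21 \<and> F 21 22 \<and> F 22 23 \<and> F 23 24 \<and> \<not> F 24 25 \<and> F 25 26 \<and> F 26 27 \<and> \<not> F 27 28 \<and> F 28 29 \<and> F 29 30 \<and> \<not> F 30 31 \<and> F 31 32 \<and> F 32 33 \<and> F 1 24 \<and> F 4 9 \<and> F 6 31 \<and> F 7 12 \<and> F 10 15 \<and> \<not> F 13 18 \<and> F 16 27 \<and> \<not> F 22 33 \<and> F 25 30 \<and> F 28 33) \<or>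
   (F 1 2 \<and> F 2 3 \<and> F 3 4 \<and> F 4 5 \<and> F 5 6 \<and> \<not> F 6 7 \<and> F 7 8 \<and> F 8 9 \<and> \<not> F 9 10 \<and> F 10 11 \<and> F 11 12 \<and> \<not> F 12 13 \<and> F 13 14 \<and> F 14 15 \<and> \<not> F 15 16 \<and> F 16 17 \<and> F 17 18 \<and> \<not> F 18 19 \<and> F 19 20 \<and> F 20 21 \<and> F 21 22 \<and> F 22 23 \<and> F 23 24 \<and> \<not> F 24 25 \<and> F 25 26 \<and> F 26 27 \<and> \<not> F 27 28 \<and> F 28 29 \<and> F 29 30 \<and> \<not> F 30 31 \<and> F 31 32 \<and> F 32 33 \<and> F 1 24 \<and> \<not> F 4 9 \<and> F 6 31 \<and> F 7 12 \<and> F 10 15 \<and> F 13 18 \<and> F 16 27 \<and> \<not> F 22 33 \<and> F 25 30 \<and> F 28 33) \<or>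
   (F 1 2 \<and> F 2 3 \<and> F 3 4 \<and> F 4 5 \<and> F 5 6 \<and> F 6 7 \<and> F 7 8 \<and> F 8 9 \<and> F 9 10 \<and> F 10 11 \<and> F 11 12 \<and> F 12 13 \<and> F 13 14 \<and> F 14 15 \<and> F 15 16 \<and> F 16 17 \<and> F 17 18 \<and> F 18 19 \<and> F 19 20 \<and> F 20 21 \<and> \<not> F 21 22 \<and> F 22 23 \<and> F 23 24 \<and> \<not> F 24 25 \<and> F 25 26 \<and> F 26 27 \<and> F 27 28 \<and> F 28 29 \<and> F 29 30 \<and> F 30 31 \<and> F 31 32 \<and> F 32 33 \<and> F 1 24 \<and> \<not> F 4 9 \<and> \<not> F 6 31 \<and> \<not> F 7 12 \<and> \<not> F 10 15 \<and> \<not> F 13 18 \<and> \<not> F 16 27 \<and> F 22 33 \<and> \<not> F 25 30 \<and> \<not> F 28 33) \<or>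
   (F 1 2 \<and> F 2 3 \<and> F 3 4 \<and> F 4 5 \<and> F 5 6 \<and> F 6 7 \<and> F 7 8 \<and> F 8 9 \<and> F 9 10 \<and> F 10 11 \<and> F 11 12 \<and> F 12 13 \<and> F 13 14 \<and> F 14 15 \<and> \<not> F 15 16 \<and> F 16 17 \<and> F 17 18 \<and> F 18 19 \<and> F 19 20 \<and> F 20 21 \<and> F 21 22 \<and> F 22 23 \<and> F 23 24 \<and> \<not> F 24 25 \<and> F 25 26 \<and> F 26 27 \<and> \<not> F 27 28 \<and> F 28 29 \<and> F 29 30 \<and> \<not> F 30 31 \<and> F 31 32 \<and> F 32 33 \<and> F 1 24 \<and> \<not> F 4 9 \<and> \<not> F 6 31 \<and> \<not> F 7 12 \<and> \<not> F 10 15 \<and> \<not> F 13 18 \<and> F 16 27 \<and> \<not> F 22 33 \<and> F 25 30 \<and> F 28 33)"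
  using c2 c4 d4 c5 c6 d6 d7 c8 d9 c10 d10 c11 c12 d12 d13 c14 d15 c16 d16 c17 c18 d18 c20 c22 d22 c23 c24 d24 d25 c26 d27 c28 d28 c29 c30 d30 d31 c32 d33 y0 y1 y2 y3 y4 y5 y6 y7 y8 y9 y10 by sat

lemma case0:
  assumes A: "F 1 2 \<and> F 2 3 \<and> F 3 4 \<and> F 4 5 \<and> F 5 6 \<and> F 6 7 \<and> F 7 8 \<and> F 8 9 \<and> F 9 10 \<and> F 10 11 \<and> F 11 12 \<and> F 12 13 \<and> F 13 14 \<and> F 14 15 \<and> F 15 16 \<and> F 16 17 \<and> F 17 18 \<and> F 18 19 \<and> F 19 20 \<and> F 20 21 \<and> F 21 22 \<and> F 22 23 \<and> F 23 24 \<and> F 24 25 \<and> F 25 26 \<and> F 26 27 \<and> F 27 28 \<and> F 28 29 \<and> F 29 30 \<and> F 30 31 \<and> F 31 32 \<and> F 32 33 \<and> \<not> F 1 24 \<and> \<not> F 4 9 \<and> \<not> F 6 31 \<and> \<not> F 7 12 \<and> \<not> F 10 15 \<and> \<not> F 13 18 \<and> \<not> F 16 27 \<and> \<not> F 22 33 \<and> \<not> F 25 30 \<and> \<not> F 28 33"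
  shows "\<exists>p k. length p = 33 \<and> distinct p \<and> set p = {1..33} \<and> k < 6 \<and>
           ((hd p = S6_in ! k \<and> last p = S6_out ! k) \<or> (hd p = S6_out ! k \<and> last p = S6_in ! k)) \<and>
           {e \<in> cycle_edges H. e \<subseteq> f ` {1..33}} = {{f (p ! j), f (p ! (j + 1))} | j. j < 32}"
proof (intro exI conjI)
  let ?p = "[1,2,3,4,5,6,7,8,9,10,11,12,13,14,15,16,17,18,19,20,21,22,23,24,25,26,27,28,29,30,31,32,33] :: nat list"
  show "length ?p = 33" by simp
  show "distinct ?p" by simp
  show "set ?p = {1..33}" by (rule set_card33) simp_all
  show "(0::nat) < 6" by simp
  show "(hd ?p = S6_in ! 0 \<and> last ?p = S6_out ! 0) \<or> (hd ?p = S6_out ! 0 \<and> last ?p = S6_in ! 0)"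
    by (simp add: S6_in_def S6_out_def)
  have Zeq: "set (zip ?p (tl ?p)) = set ([(1,2),(2,3),(3,4),(4,5),(5,6),(6,7),(7,8),(8,9),(9,10),(10,11),(11,12),(12,13),(13,14),(14,15),(15,16),(16,17),(17,18),(18,19),(19,20),(20,21),(21,22),(22,23),(23,24),(24,25),(25,26),(26,27),(27,28),(28,29),(29,30),(30,31),(31,32),(32,33)] :: (nat \<times> nat) list)" by simp
  show "{e \<in> cycle_edges H. e \<subseteq> f ` {1..33}} = {{f (?p ! j), f (?p ! (j + 1))} | j. j < 32}"
  proof (rule finish)
    show "length ?p = 33" by simp
    show "set ?p = {1..33}" by (rule set_card33) simp_all
    show "\<forall>(a,b)\<in>set EL. F a b \<longleftrightarrow> ((a,b) \<in> set (zip ?p (tl ?p)) \<or> (b,a) \<in> set (zip ?p (tl ?p)))"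
      unfolding Zeq EL_def using A by simp
    show "\<forall>(a,b)\<in>set (zip ?p (tl ?p)). (a,b) \<in> set EL \<or> (b,a) \<in> set EL"
      by (simp add: EL_def upt_rec_numeral)
  qed
qed

lemma case1:
  assumes A: "F 1 2 \<and> F 2 3 \<and> F 3 4 \<and> F 4 5 \<and> F 5 6 \<and> \<not> F 6 7 \<and> F 7 8 \<and> F 8 9 \<and> F 9 10 \<and> F 10 11 \<and> F 11 12 \<and> F 12 13 \<and> F 13 14 \<and> F 14 15 \<and> F 15 16 \<and> F 16 17 \<and> F 17 18 \<and> F 18 19 \<and> F 19 20 \<and> F 20 21 \<and> F 21 22 \<and> F 22 23 \<and> F 23 24 \<and> \<not> F 24 25 \<and> F 25 26 \<and> F 26 27 \<and> \<not> F 27 28 \<and> F 28 29 \<and> F 29 30 \<and> \<not> F 30 31 \<and> F 31 32 \<and> F 32 33 \<and> F 1 24 \<and> \<not> F 4 9 \<and> F 6 31 \<and> \<not> F 7 12 \<and> \<not> F 10 15 \<and> \<not> F 13 18 \<and> \<not> F 16 27 \<and> \<not> F 22 33 \<and> F 25 30 \<and> F 28 33"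
  shows "\<exists>p k. length p = 33 \<and> distinct p \<and> set p = {1..33} \<and> k < 6 \<and>
           ((hd p = S6_in ! k \<and> last p = S6_out ! k) \<or> (hd p = S6_out ! k \<and> last p = S6_in ! k)) \<and>
           {e \<in> cycle_edges H. e \<subseteq> f ` {1..33}} = {{f (p ! j), f (p ! (j + 1))} | j. j < 32}"
proof (intro exI conjI)
  let ?p = "[7,8,9,10,11,12,13,14,15,16,17,18,19,20,21,22,23,24,1,2,3,4,5,6,31,32,33,28,29,30,25,26,27] :: nat list"
  show "length ?p = 33" by simp
  show "distinct ?p" by simp
  show "set ?p = {1..33}" by (rule set_card33) simp_all
  show "(1::nat) < 6" by simp
  show "(hd ?p = S6_in ! 1 \<and> last ?p = S6_out ! 1) \<or> (hd ?p = S6_out ! 1 \<and> last ?p = S6_in ! 1)"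
    by (simp add: S6_in_def S6_out_def)
  have Zeq: "set (zip ?p (tl ?p)) = set ([(7,8),(8,9),(9,10),(10,11),(11,12),(12,13),(13,14),(14,15),(15,16),(16,17),(17,18),(18,19),(19,20),(20,21),(21,22),(22,23),(23,24),(24,1),(1,2),(2,3),(3,4),(4,5),(5,6),(6,31),(31,32),(32,33),(33,28),(28,29),(29,30),(30,25),(25,26),(26,27)] :: (nat \<times> nat) list)" by simp
  show "{e \<in> cycle_edges H. e \<subseteq> f ` {1..33}} = {{f (?p ! j), f (?p ! (j + 1))} | j. j < 32}"
  proof (rule finish)
    show "length ?p = 33" by simp
    show "set ?p = {1..33}" by (rule set_card33) simp_all
    show "\<forall>(a,b)\<in>set EL. F a b \<longleftrightarrow> ((a,b) \<in> set (zip ?p (tl ?p)) \<or> (b,a) \<in> set (zip ?p (tl ?p)))"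
      unfolding Zeq EL_def using A by simp
    show "\<forall>(a,b)\<in>set (zip ?p (tl ?p)). (a,b) \<in> set EL \<or> (b,a) \<in> set EL"
      by (simp add: EL_def upt_rec_numeral)
  qed
qed

lemma case2:
  assumes A: "F 1 2 \<and> F 2 3 \<and> \<not> F 3 4 \<and> F 4 5 \<and> F 5 6 \<and> \<not> F 6 7 \<and> F 7 8 \<and> F 8 9 \<and> \<not> F 9 10 \<and> F 10 11 \<and> F 11 12 \<and> \<not> F 12 13 \<and> F 13 14 \<and> F 14 15 \<and> \<not> F 15 16 \<and> F 16 17 \<and> F 17 18 \<and> F 18 19 \<and> F 19 20 \<and> F 20 21 \<and> F 21 22 \<and> F 22 23 \<and> F 23 24 \<and> \<not> F 24 25 \<and> F 25 26 \<and> F 26 27 \<and> \<not> F 27 28 \<and> F 28 29 \<and> F 29 30 \<and> \<not> F 30 31 \<and> F 31 32 \<and> F 32 33 \<and> F 1 24 \<and> F 4 9 \<and> F 6 31 \<and> F 7 12 \<and> F 10 15 \<and> \<not> F 13 18 \<and> F 16 27 \<and> \<not> F 22 33 \<and> F 25 30 \<and> F 28 33"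
  shows "\<exists>p k. length p = 33 \<and> distinct p \<and> set p = {1..33} \<and> k < 6 \<and>
           ((hd p = S6_in ! k \<and> last p = S6_out ! k) \<or> (hd p = S6_out ! k \<and> last p = S6_in ! k)) \<and>
           {e \<in> cycle_edges H. e \<subseteq> f ` {1..33}} = {{f (p ! j), f (p ! (j + 1))} | j. j < 32}"
proof (intro exI conjI)
  let ?p = "[13,14,15,10,11,12,7,8,9,4,5,6,31,32,33,28,29,30,25,26,27,16,17,18,19,20,21,22,23,24,1,2,3] :: nat list"
  show "length ?p = 33" by simp
  show "distinct ?p" by simp
  show "set ?p = {1..33}" by (rule set_card33) simp_all
  show "(2::nat) < 6" by simp
  show "(hd ?p = S6_in ! 2 \<and> last ?p = S6_out ! 2) \<or> (hd ?p = S6_out ! 2 \<and> last ?p = S6_in ! 2)"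
    by (simp add: S6_in_def S6_out_def)
  have Zeq: "set (zip ?p (tl ?p)) = set ([(13,14),(14,15),(15,10),(10,11),(11,12),(12,7),(7,8),(8,9),(9,4),(4,5),(5,6),(6,31),(31,32),(32,33),(33,28),(28,29),(29,30),(30,25),(25,26),(26,27),(27,16),(16,17),(17,18),(18,19),(19,20),(20,21),(21,22),(22,23),(23,24),(24,1),(1,2),(2,3)] :: (nat \<times> nat) list)" by simp
  show "{e \<in> cycle_edges H. e \<subseteq> f ` {1..33}} = {{f (?p ! j), f (?p ! (j + 1))} | j. j < 32}"
  proof (rule finish)
    show "length ?p = 33" by simp
    show "set ?p = {1..33}" by (rule set_card33) simp_all
    show "\<forall>(a,b)\<in>set EL. F a b \<longleftrightarrow> ((a,b) \<in> set (zip ?p (tl ?p)) \<or> (b,a) \<in> set (zip ?p (tl ?p)))"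
      unfolding Zeq EL_def using A by simp
    show "\<forall>(a,b)\<in>set (zip ?p (tl ?p)). (a,b) \<in> set EL \<or> (b,a) \<in> set EL"
      by (simp add: EL_def upt_rec_numeral)
  qed
qed

lemma case3:
  assumes A: "F 1 2 \<and> F 2 3 \<and> F 3 4 \<and> F 4 5 \<and> F 5 6 \<and> \<not> F 6 7 \<and> F 7 8 \<and> F 8 9 \<and> \<not> F 9 10 \<and> F 10 11 \<and> F 11 12 \<and> \<not> F 12 13 \<and> F 13 14 \<and> F 14 15 \<and> \<not> F 15 16 \<and> F 16 17 \<and> F 17 18 \<and> \<not> F 18 19 \<and> F 19 20 \<and> F 20 21 \<and> F 21 22 \<and> F 22 23 \<and> F 23 24 \<and> \<not> F 24 25 \<and> F 25 26 \<and> F 26 27 \<and> \<not> F 27 28 \<and> F 28 29 \<and> F 29 30 \<and> \<not> F 30 31 \<and> F 31 32 \<and> F 32 33 \<and> F 1 24 \<and> \<not> F 4 9 \<and> F 6 31 \<and> F 7 12 \<and> F 10 15 \<and> F 13 18 \<and> F 16 27 \<and> \<not> F 22 33 \<and> F 25 30 \<and> F 28 33"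
  shows "\<exists>p k. length p = 33 \<and> distinct p \<and> set p = {1..33} \<and> k < 6 \<and>
           ((hd p = S6_in ! k \<and> last p = S6_out ! k) \<or> (hd p = S6_out ! k \<and> last p = S6_in ! k)) \<and>
           {e \<in> cycle_edges H. e \<subseteq> f ` {1..33}} = {{f (p ! j), f (p ! (j + 1))} | j. j < 32}"
proof (intro exI conjI)
  let ?p = "[19,20,21,22,23,24,1,2,3,4,5,6,31,32,33,28,29,30,25,26,27,16,17,18,13,14,15,10,11,12,7,8,9] :: nat list"
  show "length ?p = 33" by simp
  show "distinct ?p" by simp
  show "set ?p = {1..33}" by (rule set_card33) simp_all
  show "(3::nat) < 6" by simp
  show "(hd ?p = S6_in ! 3 \<and> last ?p = S6_out ! 3) \<or> (hd ?p = S6_out ! 3 \<and> last ?p = S6_in ! 3)"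
    by (simp add: S6_in_def S6_out_def)
  have Zeq: "set (zip ?p (tl ?p)) = set ([(19,20),(20,21),(21,22),(22,23),(23,24),(24,1),(1,2),(2,3),(3,4),(4,5),(5,6),(6,31),(31,32),(32,33),(33,28),(28,29),(29,30),(30,25),(25,26),(26,27),(27,16),(16,17),(17,18),(18,13),(13,14),(14,15),(15,10),(10,11),(11,12),(12,7),(7,8),(8,9)] :: (nat \<times> nat) list)" by simp
  show "{e \<in> cycle_edges H. e \<subseteq> f ` {1..33}} = {{f (?p ! j), f (?p ! (j + 1))} | j. j < 32}"
  proof (rule finish)
    show "length ?p = 33" by simp
    show "set ?p = {1..33}" by (rule set_card33) simp_all
    show "\<forall>(a,b)\<in>set EL. F a b \<longleftrightarrow> ((a,b) \<in> set (zip ?p (tl ?p)) \<or> (b,a) \<in> set (zip ?p (tl ?p)))"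
      unfolding Zeq EL_def using A by simp
    show "\<forall>(a,b)\<in>set (zip ?p (tl ?p)). (a,b) \<in> set EL \<or> (b,a) \<in> set EL"
      by (simp add: EL_def upt_rec_numeral)
  qed
qed

lemma case4:
  assumes A: "F 1 2 \<and> F 2 3 \<and> F 3 4 \<and> F 4 5 \<and> F 5 6 \<and> F 6 7 \<and> F 7 8 \<and> F 8 9 \<and> F 9 10 \<and> F 10 11 \<and> F 11 12 \<and> F 12 13 \<and> F 13 14 \<and> F 14 15 \<and> F 15 16 \<and> F 16 17 \<and> F 17 18 \<and> F 18 19 \<and> F 19 20 \<and> F 20 21 \<and> \<not> F 21 22 \<and> F 22 23 \<and> F 23 24 \<and> \<not> F 24 25 \<and> F 25 26 \<and> F 26 27 \<and> F 27 28 \<and> F 28 29 \<and> F 29 30 \<and> F 30 31 \<and> F 31 32 \<and> F 32 33 \<and> F 1 24 \<and> \<not> F 4 9 \<and> \<not> F 6 31 \<and> \<not> F 7 12 \<and> \<not> F 10 15 \<and> \<not> F 13 18 \<and> \<not> F 16 27 \<and> F 22 33 \<and> \<not> F 25 30 \<and> \<not> F 28 33"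
  shows "\<exists>p k. length p = 33 \<and> distinct p \<and> set p = {1..33} \<and> k < 6 \<and>
           ((hd p = S6_in ! k \<and> last p = S6_out ! k) \<or> (hd p = S6_out ! k \<and> last p = S6_in ! k)) \<and>
           {e \<in> cycle_edges H. e \<subseteq> f ` {1..33}} = {{f (p ! j), f (p ! (j + 1))} | j. j < 32}"
proof (intro exI conjI)
  let ?p = "[25,26,27,28,29,30,31,32,33,22,23,24,1,2,3,4,5,6,7,8,9,10,11,12,13,14,15,16,17,18,19,20,21] :: nat list"
  show "length ?p = 33" by simp
  show "distinct ?p" by simp
  show "set ?p = {1..33}" by (rule set_card33) simp_all
  show "(4::nat) < 6" by simp
  show "(hd ?p = S6_in ! 4 \<and> last ?p = S6_out ! 4) \<or> (hd ?p = S6_out ! 4 \<and> last ?p = S6_in ! 4)"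
    by (simp add: S6_in_def S6_out_def)
  have Zeq: "set (zip ?p (tl ?p)) = set ([(25,26),(26,27),(27,28),(28,29),(29,30),(30,31),(31,32),(32,33),(33,22),(22,23),(23,24),(24,1),(1,2),(2,3),(3,4),(4,5),(5,6),(6,7),(7,8),(8,9),(9,10),(10,11),(11,12),(12,13),(13,14),(14,15),(15,16),(16,17),(17,18),(18,19),(19,20),(20,21)] :: (nat \<times> nat) list)" by simp
  show "{e \<in> cycle_edges H. e \<subseteq> f ` {1..33}} = {{f (?p ! j), f (?p ! (j + 1))} | j. j < 32}"
  proof (rule finish)
    show "length ?p = 33" by simp
    show "set ?p = {1..33}" by (rule set_card33) simp_all
    show "\<forall>(a,b)\<in>set EL. F a b \<longleftrightarrow> ((a,b) \<in> set (zip ?p (tl ?p)) \<or> (b,a) \<in> set (zip ?p (tl ?p)))"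
      unfolding Zeq EL_def using A by simp
    show "\<forall>(a,b)\<in>set (zip ?p (tl ?p)). (a,b) \<in> set EL \<or> (b,a) \<in> set EL"
      by (simp add: EL_def upt_rec_numeral)
  qed
qed

lemma case5:
  assumes A: "F 1 2 \<and> F 2 3 \<and> F 3 4 \<and> F 4 5 \<and> F 5 6 \<and> F 6 7 \<and> F 7 8 \<and> F 8 9 \<and> F 9 10 \<and> F 10 11 \<and> F 11 12 \<and> F 12 13 \<and> F 13 14 \<and> F 14 15 \<and> \<not> F 15 16 \<and> F 16 17 \<and> F 17 18 \<and> F 18 19 \<and> F 19 20 \<and> F 20 21 \<and> F 21 22 \<and> F 22 23 \<and> F 23 24 \<and> \<not> F 24 25 \<and> F 25 26 \<and> F 26 27 \<and> \<not> F 27 28 \<and> F 28 29 \<and> F 29 30 \<and> \<not> F 30 31 \<and> F 31 32 \<and> F 32 33 \<and> F 1 24 \<and> \<not> F 4 9 \<and> \<not> F 6 31 \<and> \<not> F 7 12 \<and> \<not> F 10 15 \<and> \<not> F 13 18 \<and> F 16 27 \<and> \<not> F 22 33 \<and> F 25 30 \<and> F 28 33"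
  shows "\<exists>p k. length p = 33 \<and> distinct p \<and> set p = {1..33} \<and> k < 6 \<and>
           ((hd p = S6_in ! k \<and> last p = S6_out ! k) \<or> (hd p = S6_out ! k \<and> last p = S6_in ! k)) \<and>
           {e \<in> cycle_edges H. e \<subseteq> f ` {1..33}} = {{f (p ! j), f (p ! (j + 1))} | j. j < 32}"
proof (intro exI conjI)
  let ?p = "[31,32,33,28,29,30,25,26,27,16,17,18,19,20,21,22,23,24,1,2,3,4,5,6,7,8,9,10,11,12,13,14,15] :: nat list"
  show "length ?p = 33" by simp
  show "distinct ?p" by simp
  show "set ?p = {1..33}" by (rule set_card33) simp_all
  show "(5::nat) < 6" by simp
  show "(hd ?p = S6_in ! 5 \<and> last ?p = S6_out ! 5) \<or> (hd ?p = S6_out ! 5 \<and> last ?p = S6_in ! 5)"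
    by (simp add: S6_in_def S6_out_def)
  have Zeq: "set (zip ?p (tl ?p)) = set ([(31,32),(32,33),(33,28),(28,29),(29,30),(30,25),(25,26),(26,27),(27,16),(16,17),(17,18),(18,19),(19,20),(20,21),(21,22),(22,23),(23,24),(24,1),(1,2),(2,3),(3,4),(4,5),(5,6),(6,7),(7,8),(8,9),(9,10),(10,11),(11,12),(12,13),(13,14),(14,15)] :: (nat \<times> nat) list)" by simp
  show "{e \<in> cycle_edges H. e \<subseteq> f ` {1..33}} = {{f (?p ! j), f (?p ! (j + 1))} | j. j < 32}"
  proof (rule finish)
    show "length ?p = 33" by simp
    show "set ?p = {1..33}" by (rule set_card33) simp_all
    show "\<forall>(a,b)\<in>set EL. F a b \<longleftrightarrow> ((a,b) \<in> set (zip ?p (tl ?p)) \<or> (b,a) \<in> set (zip ?p (tl ?p)))"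
      unfolding Zeq EL_def using A by simp
    show "\<forall>(a,b)\<in>set (zip ?p (tl ?p)). (a,b) \<in> set EL \<or> (b,a) \<in> set EL"
      by (simp add: EL_def upt_rec_numeral)
  qed
qed

lemma main_loc: "\<exists>p k. length p = 33 \<and> distinct p \<and> set p = {1..33} \<and> k < 6 \<and>
           ((hd p = S6_in ! k \<and> last p = S6_out ! k) \<or> (hd p = S6_out ! k \<and> last p = S6_in ! k)) \<and>
           {e \<in> cycle_edges H. e \<subseteq> f ` {1..33}} = {{f (p ! j), f (p ! (j + 1))} | j. j < 32}"
  using solve apply (elim disjE)
  apply (erule case0)
  apply (erule case1)
  apply (erule case2)
  apply (erule case3)
  apply (erule case4)
  apply (erule case5)
  done

end

theorem mainTheorem2:
  fixes V :: "'a set" and E :: "'a \<Rightarrow> 'a \<Rightarrow> bool" and f :: "nat \<Rightarrow> 'a" and H :: "'a list"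
  assumes graph: "simple_graph V E"
    and emb: "inj_on f {1..33}" "f ` {1..33} \<subseteq> V"
    and induced: "\<forall>u\<in>{1..33}. \<forall>v\<in>{1..33}. E (f u) (f v) \<longleftrightarrow> S6_edge u v"
    and outside: "V - f ` {1..33} \<noteq> {}"
    and attach: "\<forall>u\<in>{1..33}. \<forall>w\<in>V - f ` {1..33}. E (f u) w \<longrightarrow> u \<in> set S6_in \<union> set S6_out"
    and ham: "ham_cycle V E H"
  shows "\<exists>p k. length p = 33 \<and> distinct p \<and> set p = {1..33} \<and> k < 6 \<and>
           ((hd p = S6_in ! k \<and> last p = S6_out ! k) \<or> (hd p = S6_out ! k \<and> last p = S6_in ! k)) \<and>
           {e \<in> cycle_edges H. e \<subseteq> f ` {1..33}} = {{f (p ! j), f (p ! (j + 1))} | j. j < 32}"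
proof -
  have "gad V E f H" unfolding gad_def using graph emb induced outside attach ham by blast
  then show ?thesis by (rule gad.main_loc)
qed

end
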